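(* Let $Y^1,\dots,Y^{n+3}\in\mathbb{R}^n$ with components $Y^\alpha=(Y^\alpha_i)_{i=1}^n$. Then $$\sum_{\alpha,\beta'=1}^{n+3}(Y^\alpha)^T\mathbb X^{\alpha\beta'}Y^{\beta'}=\varepsilon\nu\big|Y^{n+1}+(n+2)\Theta Y^{n+3}\big|^2+4\varepsilon\kappa\Theta^2|Y^{n+3}|^2$$ $$+\frac{\varepsilon\mu\Theta}2\sum_{i,\alpha=1}^n\Big|\Big(Y^\alpha_i+Y^i_\alpha-\frac2n\sum_{j=1}^nY^j_j\delta_{i\alpha}\Big)+2\Big(u_iY^{n+3}_\alpha+u_\alpha Y^{n+3}_i-\frac2n\sum_{j=1}^nu_jY^{n+3}_j\delta_{i\alpha}\Big)\Big|^2,$$ and this quantity is nonnegative; in particular the matrix $\mathbb X$ is nonnegative.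
   Context: Let $n\ge1$, $\varepsilon>0$, $\Theta>0$, $u\in\mathbb{R}^n$, and let $\mu,\kappa,\nu$ be positive reals (in the paper $\mu=\rho\Theta\langle m^{-1}\rangle_\beta$, $\kappa=\frac{n+2}2\rho\Theta\langle m^{-2}\rangle_\beta$, $\nu=\rho\Theta(\langle m^{-2}\rangle_\beta-\langle m^{-1}\rangle_\beta^2)$, which are positive). With $(e_1,\dots,e_n)$ the canonical basis of $\mathbb{R}^n$, $(a\otimes b)_{ij}=a_ib_j$, $\mathrm 0_n$ the zero matrix, define $n\times n$ blocks $\mathbb X^{\alpha\beta'}$, $\alpha,\beta'\in\{1,\dots,n+3\}$: $\mathbb X^{\alpha\beta'}=\varepsilon\mu\Theta(\mathrm I_n\delta^{\alpha\beta'}+e_{\beta'}\otimes e_\alpha-\frac2ne_\alpha\otimes e_{\beta'})$ for $\alpha,\beta'\le n$; $\mathbb X^{\alpha,n+1}=\mathbb X^{\alpha,n+2}=(\mathbb X^{n+1,\alpha})^T=(\mathbb X^{n+2,\alpha})^T=\mathrm 0_n$ for $\alpha\le n$; $\mathbb X^{\alpha,n+3}=(\mathbb X^{n+3,\alpha})^T=2\varepsilon\mu\Theta(u_\alpha\mathrm I_n+u\otimes e_\alpha-\frac2ne_\alpha\otimes u)$ for $\alpha\le n$; $\mathbb X^{n+1,n+1}=\varepsilon\nu\mathrm I_n$, $\mathbb X^{n+1,n+2}=\mathbb X^{n+2,n+1}=\mathbb X^{n+2,n+2}=\mathrm 0_n$; $\mathbb X^{n+1,n+3}=\mathbb X^{n+3,n+1}=(n+2)\varepsilon\nu\Theta\mathrm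 I_n$, $\mathbb X^{n+2,n+3}=\mathbb X^{n+3,n+2}=\mathrm 0_n$; $\mathbb X^{n+3,n+3}=\varepsilon\Theta[((n+2)^2\nu\Theta+4\kappa\Theta+4\mu|u|^2)\mathrm I_n+4\frac{n-2}n\mu\,u\otimes u]$. *)

theory Defs
  imports Complex_Main
begin

text \<open>Conventions: vectors in R^n are functions nat => real used on indices 1..n;
  the family Y^1..Y^(n+3) is Y :: nat => nat => real, Y a i = i-th component of Y^a.
  Block X^(a,b) is the n x n matrix with entries Xblk ... a b i j (i,j in 1..n).\<close>

definition kd :: "nat \<Rightarrow> nat \<Rightarrow> real" where
  "kd i j = (if i = j then 1 else 0)"

definition sqnorm :: "nat \<Rightarrow> (nat \<Rightarrow> real) \<Rightarrow> real" where
  "sqnorm n v = (\<Sum>j=1..n. (v j)^2)"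

definition Xblk :: "nat \<Rightarrow> real \<Rightarrow> real \<Rightarrow> real \<Rightarrow> real \<Rightarrow> real \<Rightarrow> (nat \<Rightarrow> real)
    \<Rightarrow> nat \<Rightarrow> nat \<Rightarrow> nat \<Rightarrow> nat \<Rightarrow> real" where
  "Xblk n \<epsilon> \<Theta> \<mu> \<kappa> \<nu> u a b i j =
    (if a \<le> n \<and> b \<le> n then
       \<epsilon>*\<mu>*\<Theta>*(kd a b * kd i j + kd i b * kd j a - 2 / real n * kd i a * kd j b)
     else if a \<le> n \<and> (b = n+1 \<or> b = n+2) then 0
     else if (a = n+1 \<or> a = n+2) \<and> b \<le> n then 0
     else if a \<le> n \<and> b = n+3 then
       2*\<epsilon>*\<mu>*\<Theta>*(u a * kd i j + u i * kd j a - 2 / real n * kd i a * u j)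
     else if a = n+3 \<and> b \<le> n then
       \<comment> \<open>transpose of the block (b, n+3)\<close>
       2*\<epsilon>*\<mu>*\<Theta>*(u b * kd j i + u j * kd i b - 2 / real n * kd j b * u i)
     else if a = n+1 \<and> b = n+1 then \<epsilon>*\<nu>*kd i j
     else if (a = n+1 \<and> b = n+2) \<or> (a = n+2 \<and> b = n+1) \<or> (a = n+2 \<and> b = n+2) then 0
     else if (a = n+1 \<and> b = n+3) \<or> (a = n+3 \<and> b = n+1) then
       (real n + 2)*\<epsilon>*\<nu>*\<Theta>*kd i j
     else if (a = n+2 \<and> b = n+3) \<or> (a = n+3 \<and> b = n+2) then 0
     else if a = n+3 \<and> b = n+3 then
       \<epsilon>*\<Theta>*(((real n + 2)^2*\<nu>*\<Theta> + 4*\<kappa>*\<Theta> + 4*\<mu>*sqnorm n u) * kd i j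
               + 4*(real n - 2)/real n*\<mu>*(u i * u j))
     else 0)"

definition Xquad :: "nat \<Rightarrow> real \<Rightarrow> real \<Rightarrow> real \<Rightarrow> real \<Rightarrow> real \<Rightarrow> (nat \<Rightarrow> real)
    \<Rightarrow> (nat \<Rightarrow> nat \<Rightarrow> real) \<Rightarrow> real" where
  "Xquad n \<epsilon> \<Theta> \<mu> \<kappa> \<nu> u Y =
    (\<Sum>a=1..n+3. \<Sum>b=1..n+3. \<Sum>i=1..n. \<Sum>j=1..n.
        Y a i * Xblk n \<epsilon> \<Theta> \<mu> \<kappa> \<nu> u a b i j * Y b j)"

end

theory Submission
  imports Defs
begin
lemma kd_sum_l: "finite S \<Longrightarrow> i \<in> S \<Longrightarrow> (\<Sum>j\<in>S. kd i j * f j) = f i"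
proof -
  assume "finite S" "i \<in> S"
  have "(\<Sum>j\<in>S. kd i j * f j) = (\<Sum>j\<in>S. if i = j then f j else 0)" by (rule sum.cong) (auto simp: kd_def)
  thus ?thesis using \<open>finite S\<close> \<open>i \<in> S\<close> by simp
qed
lemma kd_sum_r: "finite S \<Longrightarrow> i \<in> S \<Longrightarrow> (\<Sum>j\<in>S. kd j i * f j) = f i"
proof -
  assume "finite S" "i \<in> S"
  have "(\<Sum>j\<in>S. kd j i * f j) = (\<Sum>j\<in>S. if j = i then f j else 0)" by (rule sum.cong) (auto simp: kd_def)
  thus ?thesis using \<open>finite S\<close> \<open>i \<in> S\<close> by simp
qed
lemma kd_sum_const: "finite S \<Longrightarrow> i \<in> S \<Longrightarrow> (\<Sum>j\<in>S. kd i j * c) = c"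
  using kd_sum_l[of S i "\<lambda>_. c"] by simp
lemma blockA: assumes "finite S" "a \<in> S" "b \<in> S"
  shows "(\<Sum>i\<in>S. \<Sum>j\<in>S. Y a i * (c*(kd a b * kd i j + kd i b * kd j a - d * kd i a * kd j b)) * Y b j)
   = c*(kd a b * (\<Sum>i\<in>S. Y a i * Y b i)) + c*(Y a b * Y b a) - c*d*(Y a a * Y b b)"
proof -
  have "(\<Sum>i\<in>S. \<Sum>j\<in>S. Y a i * (c*(kd a b * kd i j + kd i b * kd j a - d * kd i a * kd j b)) * Y b j)
    = (\<Sum>i\<in>S. \<Sum>j\<in>S. c * kd a b * (kd i j * (Y a i * Y b j)) + c * (kd i b * (kd j a * (Y a i * Y b j))) - c * d * (kd i a * (kd j b * (Y a i * Y b j))))"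
    by (intro sum.cong refl) (simp add: algebra_simps)
  also have "... = c*(kd a b * (\<Sum>i\<in>S. Y a i * Y b i)) + c*(Y a b * Y b a) - c*d*(Y a a * Y b b)"
    using assms by (simp add: sum.distrib sum_subtractf sum_distrib_left[symmetric] kd_sum_l kd_sum_r)
  finally show ?thesis .
qed
lemma blockB: assumes "finite S" "a \<in> S"
  shows "(\<Sum>i\<in>S. \<Sum>j\<in>S. Y a i * (c*(u a * kd i j + u i * kd j a - d * kd i a * u j)) * W j)
   = c*(u a * (\<Sum>i\<in>S. Y a i * W i)) + c*(W a * (\<Sum>i\<in>S. Y a i * u i)) - c*d*(Y a a * (\<Sum>j\<in>S. u j * W j))"
proof -
  have "(\<Sum>i\<in>S. \<Sum>j\<in>S. Y a i * (c*(u a * kd i j + u i * kd j a - d * kd i a * u j)) * W j)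
    = (\<Sum>i\<in>S. \<Sum>j\<in>S. c*(u a * (kd i j * (Y a i * W j))) + c*(kd j a * (Y a i * u i * W j)) - c*d*(kd i a * (Y a i * (u j * W j))))"
    by (intro sum.cong refl) (simp add: algebra_simps)
  also have "... = c*(u a * (\<Sum>i\<in>S. Y a i * W i)) + c*(W a * (\<Sum>i\<in>S. Y a i * u i)) - c*d*(Y a a * (\<Sum>j\<in>S. u j * W j))"
    using assms by (simp add: sum.distrib sum_subtractf sum_distrib_left[symmetric] sum_distrib_right[symmetric] kd_sum_l kd_sum_r mult.commute)
  finally show ?thesis .
qed
lemma blockC: assumes "finite S" "b \<in> S"
  shows "(\<Sum>i\<in>S. \<Sum>j\<in>S. W i * (c*(u b * kd j i + u j * kd i b - d * kd j b * u i)) * Y b j)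
   = c*(u b * (\<Sum>i\<in>S. Y b i * W i)) + c*(W b * (\<Sum>i\<in>S. Y b i * u i)) - c*d*(Y b b * (\<Sum>j\<in>S. u j * W j))"
proof -
  have "(\<Sum>i\<in>S. \<Sum>j\<in>S. W i * (c*(u b * kd j i + u j * kd i b - d * kd j b * u i)) * Y b j)
    = (\<Sum>j\<in>S. \<Sum>i\<in>S. W i * (c*(u b * kd j i + u j * kd i b - d * kd j b * u i)) * Y b j)"
    by (rule sum.swap)
  also have "... = (\<Sum>j\<in>S. \<Sum>i\<in>S. c*(u b * (kd j i * (Y b j * W i))) + c*(kd i b * (Y b j * u j * W i)) - c*d*(kd j b * (Y b j * (u i * W i))))"
    by (intro sum.cong refl) (simp add: algebra_simps)
  also have "... = c*(u b * (\<Sum>i\<in>S. Y b i * W i)) + c*(W b * (\<Sum>i\<in>S. Y b i * u i)) - c*d*(Y b b * (\<Sum>j\<in>S. u j * W j))"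
    using assms by (simp add: sum.distrib sum_subtractf sum_distrib_left[symmetric] sum_distrib_right[symmetric] kd_sum_l kd_sum_r mult.commute)
  finally show ?thesis .
qed
lemma blockD: assumes "finite S"
  shows "(\<Sum>i\<in>S. \<Sum>j\<in>S. V i * (e * kd i j) * W j) = e * (\<Sum>i\<in>S. V i * W i)"
proof -
  have "(\<Sum>i\<in>S. \<Sum>j\<in>S. V i * (e * kd i j) * W j) = (\<Sum>i\<in>S. \<Sum>j\<in>S. e * (kd i j * (V i * W j)))"
    by (intro sum.cong refl) (simp add: algebra_simps)
  also have "... = e * (\<Sum>i\<in>S. V i * W i)"
    using assms by (simp add: sum_distrib_left[symmetric] kd_sum_l)
  finally show ?thesis .
qed
lemma blockF: assumes "finite S"
  shows "(\<Sum>i\<in>S. \<Sum>j\<in>S. W i * (e * (K * kd i j + L * (u i * u j))) * W j) = e * K * (\<Sum>i\<in>S. W i * W i) + e * L * ((\<Sum>i\<in>S. u i * W i) * (\<Sum>i\<in>S. u i * W i))"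
proof -
  have "(\<Sum>i\<in>S. \<Sum>j\<in>S. W i * (e * (K * kd i j + L * (u i * u j))) * W j) = (\<Sum>i\<in>S. \<Sum>j\<in>S. e * K * (kd i j * (W i * W j)) + e * L * ((u i * W i) * (u j * W j)))"
    by (intro sum.cong refl) (simp add: algebra_simps)
  also have "... = e * K * (\<Sum>i\<in>S. W i * W i) + e * L * ((\<Sum>i\<in>S. u i * W i) * (\<Sum>i\<in>S. u i * W i))"
    using assms by (simp add: sum.distrib sum_distrib_left[symmetric] sum_distrib_right[symmetric] kd_sum_l)
  finally show ?thesis .
qed
lemma split3: "(\<Sum>a\<in>{1..(n::nat)+3}. f a) = (\<Sum>a\<in>{1..n}. f a) + f (n+1) + f (n+2) + (f (n+3)::real)"
proof -
  have "{1..n+3} = insert (n+3) (insert (n+2) (insert (n+1) {1..n}))" by auto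
  thus ?thesis by (simp add: algebra_simps)
qed
lemma lhs_poly:
  fixes n :: nat and \<epsilon> \<Theta> \<mu> \<kappa> \<nu> :: real and u :: "nat \<Rightarrow> real" and Y :: "nat \<Rightarrow> nat \<Rightarrow> real"
  defines "N \<equiv> {1..n}" and "W \<equiv> Y (n+3)" and "V \<equiv> Y (n+1)"
    and "c \<equiv> \<epsilon>*\<mu>*\<Theta>" and "d \<equiv> 2 / real n"
    and "K \<equiv> (real n + 2)^2*\<nu>*\<Theta> + 4*\<kappa>*\<Theta> + 4*\<mu>*sqnorm n u"
    and "L \<equiv> 4*(real n - 2)/real n*\<mu>"
  shows "Xquad n \<epsilon> \<Theta> \<mu> \<kappa> \<nu> u Y =
     c*((\<Sum>a\<in>N. \<Sum>i\<in>N. Y a i * Y a i) + (\<Sum>a\<in>N. \<Sum>b\<in>N. Y a b * Y b a) - d * (\<Sum>a\<in>N. Y a a) * (\<Sum>a\<in>N. Y a a))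
   + 4*c*((\<Sum>a\<in>N. u a * (\<Sum>i\<in>N. Y a i * W i)) + (\<Sum>a\<in>N. W a * (\<Sum>i\<in>N. Y a i * u i)) - d * (\<Sum>a\<in>N. Y a a) * (\<Sum>j\<in>N. u j * W j))
   + \<epsilon>*\<nu>*(\<Sum>i\<in>N. V i * V i) + 2*((real n + 2)*\<epsilon>*\<nu>*\<Theta>)*(\<Sum>i\<in>N. V i * W i)
   + \<epsilon>*\<Theta>*K*(\<Sum>i\<in>N. W i * W i)
   + \<epsilon>*\<Theta>*L*((\<Sum>i\<in>N. u i * W i) * (\<Sum>i\<in>N. u i * W i))"
proof -
  define X where "X = Xblk n \<epsilon> \<Theta> \<mu> \<kappa> \<nu> u"
  define Q where "Q = (\<lambda>a b. \<Sum>i\<in>N. \<Sum>j\<in>N. Y a i * X a b i j * Y b j)"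
  have fin: "finite N" by (simp add: N_def)
  have nN: "n+1 \<notin> N" "n+2 \<notin> N" "n+3 \<notin> N" by (auto simp: N_def)
  have XQ: "Xquad n \<epsilon> \<Theta> \<mu> \<kappa> \<nu> u Y = (\<Sum>a\<in>{1..n+3}. \<Sum>b\<in>{1..n+3}. Q a b)"
    unfolding Xquad_def Q_def X_def N_def ..
  have QA: "Q a b = c*(kd a b * (\<Sum>i\<in>N. Y a i * Y b i)) + c*(Y a b * Y b a) - c*d*(Y a a * Y b b)"
    if "a \<in> N" "b \<in> N" for a b
  proof -
    have "X a b i j = c*(kd a b * kd i j + kd i b * kd j a - d * kd i a * kd j b)" for i j
      using that by (simp add: X_def Xblk_def N_def c_def d_def)
    thus ?thesis unfolding Q_def using blockA[OF fin that] by simp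
  qed
  have QB: "Q a (n+3) = (2*c)*(u a * (\<Sum>i\<in>N. Y a i * W i)) + (2*c)*(W a * (\<Sum>i\<in>N. Y a i * u i)) - (2*c)*d*(Y a a * (\<Sum>j\<in>N. u j * W j))"
    if "a \<in> N" for a
  proof -
    have "X a (n+3) i j = (2*c)*(u a * kd i j + u i * kd j a - d * kd i a * u j)" for i j
      using that by (simp add: X_def Xblk_def N_def c_def d_def mult.assoc)
    thus ?thesis unfolding Q_def W_def using blockB[OF fin that] by simp
  qed
  have QC: "Q (n+3) b = (2*c)*(u b * (\<Sum>i\<in>N. Y b i * W i)) + (2*c)*(W b * (\<Sum>i\<in>N. Y b i * u i)) - (2*c)*d*(Y b b * (\<Sum>j\<in>N. u j * W j))"
    if "b \<in> N" for b
  proof -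
    have "X (n+3) b i j = (2*c)*(u b * kd j i + u j * kd i b - d * kd j b * u i)" for i j
      using that by (simp add: X_def Xblk_def N_def c_def d_def mult.assoc)
    thus ?thesis unfolding Q_def W_def using blockC[OF fin that] by simp
  qed
  have Q0: "Q a (n+1) = 0" "Q a (n+2) = 0" "Q (n+1) a = 0" "Q (n+2) a = 0" if "a \<in> N" for a
    using that by (simp_all add: Q_def X_def Xblk_def N_def)
  have Q00: "Q (n+1) (n+2) = 0" "Q (n+2) (n+1) = 0" "Q (n+2) (n+2) = 0" "Q (n+2) (n+3) = 0" "Q (n+3) (n+2) = 0"
    by (simp_all add: Q_def X_def Xblk_def)
  have QD: "Q (n+1) (n+1) = \<epsilon>*\<nu>*(\<Sum>i\<in>N. V i * V i)"
  proof -
    have "X (n+1) (n+1) i j = \<epsilon>*\<nu>*kd i j" for i j by (simp add: X_def Xblk_def)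
    thus ?thesis unfolding Q_def V_def using blockD[OF fin] by simp
  qed
  have QE1: "Q (n+1) (n+3) = (real n + 2)*\<epsilon>*\<nu>*\<Theta>*(\<Sum>i\<in>N. V i * W i)"
  proof -
    have "X (n+1) (n+3) i j = (real n + 2)*\<epsilon>*\<nu>*\<Theta>*kd i j" for i j by (simp add: X_def Xblk_def)
    thus ?thesis unfolding Q_def V_def W_def using blockD[OF fin] by simp
  qed
  have QE2: "Q (n+3) (n+1) = (real n + 2)*\<epsilon>*\<nu>*\<Theta>*(\<Sum>i\<in>N. V i * W i)"
  proof -
    have "X (n+3) (n+1) i j = (real n + 2)*\<epsilon>*\<nu>*\<Theta>*kd i j" for i j by (simp add: X_def Xblk_def)
    hence "Q (n+3) (n+1) = (real n + 2)*\<epsilon>*\<nu>*\<Theta>*(\<Sum>i\<in>N. W i * V i)"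
      unfolding Q_def V_def W_def using blockD[OF fin, of "Y (n+3)" "(real n + 2)*\<epsilon>*\<nu>*\<Theta>" "Y (n+1)"] by simp
    moreover have "(\<Sum>i\<in>N. W i * V i) = (\<Sum>i\<in>N. V i * W i)" by (simp add: mult.commute)
    ultimately show ?thesis by simp
  qed
  have QF: "Q (n+3) (n+3) = \<epsilon>*\<Theta>*K*(\<Sum>i\<in>N. W i * W i) + \<epsilon>*\<Theta>*L*((\<Sum>i\<in>N. u i * W i) * (\<Sum>i\<in>N. u i * W i))"
  proof -
    have "X (n+3) (n+3) i j = \<epsilon>*\<Theta>*(K * kd i j + L * (u i * u j))" for i j by (simp add: X_def Xblk_def K_def L_def)
    thus ?thesis unfolding Q_def W_def using blockF[OF fin] by simp
  qed
  have SA: "(\<Sum>a\<in>N. \<Sum>b\<in>N. Q a b) = c*((\<Sum>a\<in>N. \<Sum>i\<in>N. Y a i * Y a i) + (\<Sum>a\<in>N. \<Sum>b\<in>N. Y a b * Y b a) - d * (\<Sum>a\<in>N. Y a a) * (\<Sum>a\<in>N. Y a a))"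
    using fin by (simp add: QA sum.distrib sum_subtractf sum_distrib_left[symmetric] sum_distrib_right[symmetric] kd_sum_l algebra_simps)
  show ?thesis unfolding XQ split3 N_def[symmetric]
    apply (simp only: Q0 Q00 QB QC QD QE1 QE2 QF sum.distrib cong: sum.cong)
    apply (simp only: SA)
    using fin nN
    apply (simp add: sum.distrib sum_subtractf sum_distrib_left sum_distrib_right algebra_simps)
    by (subst sum.swap) simp
qed
lemma sq_expand:
  fixes A B C D Yii uW k d t p :: real
  assumes "k = 0 \<or> (k = 1 \<and> A = Yii \<and> B = Yii \<and> C = uW \<and> D = uW)"
  shows "((A + B - d*t*k) + 2*(C + D - d*p*k))^2 =
    A*A + B*B + 2*(A*B) + 4*(C*C) + 4*(D*D) + 8*(C*D) + 4*(A*C) + 4*(A*D) + 4*(B*C) + 4*(B*D)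
    + k * (d*d*t*t + 4*d*d*p*p + 4*d*d*t*p - (2*d*t+4*d*p)*(2*Yii) - (4*d*t+8*d*p)*(2*uW))"
  using assms
proof
  assume "k = 0" thus ?thesis by (simp add: power2_eq_square algebra_simps)
next
  assume "k = 1 \<and> A = Yii \<and> B = Yii \<and> C = uW \<and> D = uW"
  thus ?thesis by (simp add: power2_eq_square algebra_simps)
qed
lemma rhs_R:
  fixes n :: nat and u :: "nat \<Rightarrow> real" and Y :: "nat \<Rightarrow> nat \<Rightarrow> real" and W :: "nat \<Rightarrow> real"
  defines "N \<equiv> {1..n}"
  shows "(\<Sum>i\<in>N. \<Sum>a\<in>N.
              ((Y a i + Y i a - 2 / real n * (\<Sum>j\<in>N. Y j j) * kd i a)
               + 2*(u i * W a + u a * W i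
                    - 2 / real n * (\<Sum>j\<in>N. u j * W j) * kd i a))^2)
   = 2*(\<Sum>a\<in>N. \<Sum>i\<in>N. Y a i * Y a i) + 2*(\<Sum>a\<in>N. \<Sum>b\<in>N. Y a b * Y b a)
     + 8*((\<Sum>i\<in>N. u i * u i) * (\<Sum>i\<in>N. W i * W i)) + 8*((\<Sum>i\<in>N. u i * W i) * (\<Sum>i\<in>N. u i * W i))
     + 8*(\<Sum>a\<in>N. u a * (\<Sum>i\<in>N. Y a i * W i)) + 8*(\<Sum>a\<in>N. W a * (\<Sum>i\<in>N. Y a i * u i))
     + (let d = 2 / real n; t = (\<Sum>j\<in>N. Y j j); p = (\<Sum>j\<in>N. u j * W j) in
        real n * (d*d*t*t + 4*d*d*p*p + 4*d*d*t*p) - (2*d*t+4*d*p)*(2*t) - (4*d*t+8*d*p)*(2*p))"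
proof -
  define d where "d = 2 / real n"
  define t where "t = (\<Sum>j\<in>N. Y j j)"
  define p where "p = (\<Sum>j\<in>N. u j * W j)"
  have fin: "finite N" by (simp add: N_def)
  have cN: "card N = n" by (simp add: N_def)
  have pre: "kd i a = 0 \<or> (kd i a = 1 \<and> Y a i = Y i i \<and> Y i a = Y i i \<and> u i * W a = u i * W i \<and> u a * W i = u i * W i)" for i a
    by (auto simp: kd_def)
  note pw = sq_expand[OF pre, where d=d and t=t and p=p]
  have e1: "(\<Sum>i\<in>N. \<Sum>a\<in>N. Y a i*Y a i) = (\<Sum>a\<in>N. \<Sum>i\<in>N. Y a i * Y a i)" by (rule sum.swap)
  have e2: "(\<Sum>i\<in>N. \<Sum>a\<in>N. Y i a*Y i a) = (\<Sum>a\<in>N. \<Sum>i\<in>N. Y a i * Y a i)" by simp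
  have e3: "(\<Sum>i\<in>N. \<Sum>a\<in>N. Y a i*Y i a) = (\<Sum>a\<in>N. \<Sum>b\<in>N. Y a b * Y b a)" by (simp add: mult.commute)
  have e4: "(\<Sum>i\<in>N. \<Sum>a\<in>N. (u i*W a)*(u i*W a)) = (\<Sum>i\<in>N. u i * u i) * (\<Sum>i\<in>N. W i * W i)"
    unfolding sum_product by (intro sum.cong refl) (simp add: algebra_simps)
  have e5: "(\<Sum>i\<in>N. \<Sum>a\<in>N. (u a*W i)*(u a*W i)) = (\<Sum>i\<in>N. u i * u i) * (\<Sum>i\<in>N. W i * W i)"
  proof -
    have "(\<Sum>i\<in>N. \<Sum>a\<in>N. (u a*W i)*(u a*W i)) = (\<Sum>i\<in>N. W i * W i) * (\<Sum>i\<in>N. u i * u i)"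
      unfolding sum_product by (intro sum.cong refl) (simp add: algebra_simps)
    thus ?thesis by (simp add: mult.commute)
  qed
  have e6: "(\<Sum>i\<in>N. \<Sum>a\<in>N. (u i*W a)*(u a*W i)) = (\<Sum>i\<in>N. u i * W i) * (\<Sum>i\<in>N. u i * W i)"
    unfolding sum_product by (intro sum.cong refl) (simp add: algebra_simps)
  have e7: "(\<Sum>i\<in>N. \<Sum>a\<in>N. Y a i*(u i*W a)) = (\<Sum>a\<in>N. W a * (\<Sum>i\<in>N. Y a i * u i))"
    by (subst sum.swap) (simp add: sum_distrib_left algebra_simps)
  have e8: "(\<Sum>i\<in>N. \<Sum>a\<in>N. Y a i*(u a*W i)) = (\<Sum>a\<in>N. u a * (\<Sum>i\<in>N. Y a i * W i))"
    by (subst sum.swap) (simp add: sum_distrib_left algebra_simps)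
  have e9: "(\<Sum>i\<in>N. \<Sum>a\<in>N. Y i a*(u i*W a)) = (\<Sum>a\<in>N. u a * (\<Sum>i\<in>N. Y a i * W i))"
    by (simp add: sum_distrib_left algebra_simps)
  have e10: "(\<Sum>i\<in>N. \<Sum>a\<in>N. Y i a*(u a*W i)) = (\<Sum>a\<in>N. W a * (\<Sum>i\<in>N. Y a i * u i))"
    by (simp add: sum_distrib_left algebra_simps)
  have e11: "(\<Sum>i\<in>N. \<Sum>a\<in>N. kd i a * (d*d*t*t + 4*d*d*p*p + 4*d*d*t*p - (2*d*t+4*d*p)*(2*Y i i) - (4*d*t+8*d*p)*(2*(u i*W i))))
      = real n * (d*d*t*t + 4*d*d*p*p + 4*d*d*t*p) - (2*d*t+4*d*p)*(2*t) - (4*d*t+8*d*p)*(2*p)"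
  proof -
    have "(\<Sum>i\<in>N. \<Sum>a\<in>N. kd i a * (d*d*t*t + 4*d*d*p*p + 4*d*d*t*p - (2*d*t+4*d*p)*(2*Y i i) - (4*d*t+8*d*p)*(2*(u i*W i))))
      = (\<Sum>i\<in>N. (d*d*t*t + 4*d*d*p*p + 4*d*d*t*p) - (2*d*t+4*d*p)*2*Y i i - (4*d*t+8*d*p)*2*(u i*W i))"
      by (intro sum.cong refl) (simp add: kd_sum_const[OF fin] mult.assoc, simp add: algebra_simps)
    also have "... = real n * (d*d*t*t + 4*d*d*p*p + 4*d*d*t*p) - (2*d*t+4*d*p)*(2*t) - (4*d*t+8*d*p)*(2*p)"
    proof -
      have "(\<Sum>i\<in>N. Y i i) = t" "(\<Sum>i\<in>N. u i * W i) = p" by (simp_all add: t_def p_def)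
      thus ?thesis by (simp add: sum_subtractf sum_distrib_left[symmetric] cN mult.assoc, simp add: algebra_simps)
    qed
    finally show ?thesis .
  qed
  have "(\<Sum>i\<in>N. \<Sum>a\<in>N. ((Y a i + Y i a - d*t*kd i a) + 2*(u i * W a + u a * W i - d*p*kd i a))^2)
    = 2*(\<Sum>a\<in>N. \<Sum>i\<in>N. Y a i * Y a i) + 2*(\<Sum>a\<in>N. \<Sum>b\<in>N. Y a b * Y b a)
     + 8*((\<Sum>i\<in>N. u i * u i) * (\<Sum>i\<in>N. W i * W i)) + 8*((\<Sum>i\<in>N. u i * W i) * (\<Sum>i\<in>N. u i * W i))
     + 8*(\<Sum>a\<in>N. u a * (\<Sum>i\<in>N. Y a i * W i)) + 8*(\<Sum>a\<in>N. W a * (\<Sum>i\<in>N. Y a i * u i))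
     + (real n * (d*d*t*t + 4*d*d*p*p + 4*d*d*t*p) - (2*d*t+4*d*p)*(2*t) - (4*d*t+8*d*p)*(2*p))"
    unfolding pw
    by (simp only: sum.distrib sum_distrib_left[symmetric] e1 e3 e4 e5 e6 e7 e8 e9 e10 e11)
  thus ?thesis unfolding Let_def d_def[symmetric] t_def[symmetric] p_def[symmetric] .
qed
lemma alg:
  fixes x \<epsilon> \<Theta> \<mu> \<kappa> \<nu> s1 s2 t p s3 s4 q1 q2 sw su :: real
  assumes "x > 0"
  shows "(\<epsilon>*\<mu>*\<Theta>)*(s1 + s2 - 2 / x * t * t) + 4*(\<epsilon>*\<mu>*\<Theta>)*(s3 + s4 - 2 / x * t * p)
   + \<epsilon>*\<nu>*q1 + 2*((x + 2)*\<epsilon>*\<nu>*\<Theta>)*q2 + \<epsilon>*\<Theta>*((x + 2)^2*\<nu>*\<Theta> + 4*\<kappa>*\<Theta> + 4*\<mu>*su)*sw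
   + \<epsilon>*\<Theta>*(4*(x - 2)/x*\<mu>)*(p * p)
   = \<epsilon>*\<nu>*(q1 + 2*((x + 2)*\<Theta>)*q2 + ((x + 2)*\<Theta>)^2 * sw) + 4*\<epsilon>*\<kappa>*\<Theta>^2*sw
   + \<epsilon>*\<mu>*\<Theta>/2 * (2*s1 + 2*s2 + 8*(su*sw) + 8*(p*p) + 8*s3 + 8*s4
      + (x * (2 / x * (2 / x) * t * t + 4 * (2 / x) * (2 / x) * p * p + 4 * (2 / x) * (2 / x) * t * p)
         - (2 * (2 / x) * t + 4 * (2 / x) * p) * (2 * t) - (4 * (2 / x) * t + 8 * (2 / x) * p) * (2 * p)))"
  using assms by (simp add: field_simps power2_eq_square)

lemma identity:
  fixes n :: nat and \<epsilon> \<Theta> \<mu> \<kappa> \<nu> :: real and u :: "nat \<Rightarrow> real"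
    and Y :: "nat \<Rightarrow> nat \<Rightarrow> real"
  assumes "n \<ge> 1"
  shows "Xquad n \<epsilon> \<Theta> \<mu> \<kappa> \<nu> u Y =
           \<epsilon>*\<nu>*(\<Sum>i=1..n. (Y (n+1) i + (real n + 2)*\<Theta>*Y (n+3) i)^2)
         + 4*\<epsilon>*\<kappa>*\<Theta>^2*(\<Sum>i=1..n. (Y (n+3) i)^2)
         + \<epsilon>*\<mu>*\<Theta>/2 * (\<Sum>i=1..n. \<Sum>a=1..n.
              ((Y a i + Y i a - 2 / real n * (\<Sum>j=1..n. Y j j) * kd i a)
               + 2*(u i * Y (n+3) a + u a * Y (n+3) i
                    - 2 / real n * (\<Sum>j=1..n. u j * Y (n+3) j) * kd i a))^2)"
proof -
  have S1: "(\<Sum>i=1..n. (Y (n+1) i + (real n + 2)*\<Theta>*Y (n+3) i)^2) =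
     (\<Sum>i=1..n. Y (n+1) i * Y (n+1) i) + 2*((real n + 2)*\<Theta>)*(\<Sum>i=1..n. Y (n+1) i * Y (n+3) i)
     + ((real n + 2)*\<Theta>)^2 * (\<Sum>i=1..n. Y (n+3) i * Y (n+3) i)"
    by (simp add: sum.distrib sum_distrib_left power2_eq_square algebra_simps)
  have S2: "(\<Sum>i=1..n. (Y (n+3) i)^2) = (\<Sum>i=1..n. Y (n+3) i * Y (n+3) i)"
    by (simp add: power2_eq_square)
  have S3: "sqnorm n u = (\<Sum>i=1..n. u i * u i)" by (simp add: sqnorm_def power2_eq_square)
  have np: "real n > 0" using assms by simp
  show ?thesis
    unfolding lhs_poly rhs_R S1 S2 S3 Let_def
    by (rule alg[OF np])
qed
theorem lemma4p7:
  fixes n :: nat and \<epsilon> \<Theta> \<mu> \<kappa> \<nu> :: real and u :: "nat \<Rightarrow> real"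
    and Y :: "nat \<Rightarrow> nat \<Rightarrow> real"
  assumes "n \<ge> 1" and "\<epsilon> > 0" and "\<Theta> > 0" and "\<mu> > 0" and "\<kappa> > 0" and "\<nu> > 0"
  shows "Xquad n \<epsilon> \<Theta> \<mu> \<kappa> \<nu> u Y =
           \<epsilon>*\<nu>*(\<Sum>i=1..n. (Y (n+1) i + (real n + 2)*\<Theta>*Y (n+3) i)^2)
         + 4*\<epsilon>*\<kappa>*\<Theta>^2*(\<Sum>i=1..n. (Y (n+3) i)^2)
         + \<epsilon>*\<mu>*\<Theta>/2 * (\<Sum>i=1..n. \<Sum>a=1..n.
              ((Y a i + Y i a - 2 / real n * (\<Sum>j=1..n. Y j j) * kd i a)
               + 2*(u i * Y (n+3) a + u a * Y (n+3) i
                    - 2 / real n * (\<Sum>j=1..n. u j * Y (n+3) j) * kd i a))^2)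
       \<and> Xquad n \<epsilon> \<Theta> \<mu> \<kappa> \<nu> u Y \<ge> 0
       \<and> (\<forall>Z. Xquad n \<epsilon> \<Theta> \<mu> \<kappa> \<nu> u Z \<ge> 0)"
proof -
  have nn: "Xquad n \<epsilon> \<Theta> \<mu> \<kappa> \<nu> u Z \<ge> 0" for Z
    unfolding identity[OF assms(1)]
    using assms by (intro add_nonneg_nonneg mult_nonneg_nonneg divide_nonneg_nonneg sum_nonneg zero_le_power2; simp)
  show ?thesis using identity[OF assms(1)] nn by blast
qed

end
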